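(* There is a constant $c$ such that for every $n\in\mathbb{N}_{\ge1}$ there exists a language $L_n$ recognized by a deterministic weak Muller automaton $\mathfrak{A}_n$ with explicitly represented acceptance family, of size at most $c\cdot n$, such that Player $O$ wins $\Gamma_f(L_n)$ for some constant delay function $f$, but Player $I$ wins $\Gamma_g(L_n)$ for every delay function $g$ with $g(0)\le 2^n$.
   Context: An $\omega$-automaton $\mathfrak{A}=(Q,\Sigma,q_I,\Delta,\mathrm{Acc})$ has finite state set $Q$, alphabet $\Sigma$, initial state $q_I$, transitions $\Delta\subseteq Q\times\Sigma\times Q$, accepting runs $\mathrm{Acc}\subseteq\Delta^\omega$; $L(\mathfrak{A})$ is the set of words processed by an initial accepting run. Deterministic means $\Delta$ is a total function $Q\times\Sigma\to Q$. A weak Muller automaton has $\mathcal{F}\subseteq 2^Q$ and accepts runs whose set of visited states lies in $\mathcal{F}$. With explicit representation ($\mathcal{F}$ listed element by element), its size is $|Q|+|\mathcal{F}|$. A delay function is $f:\mathbb{N}\to\mathbb{N}_{\ge1}$; it is constant if $f(i)=1$ for all $i>0$. In the delay game $\Gamma_f(L)$, $L\subseteq(\Sigma_I\times\Sigma_O)^\omega$, in round $i=0,1,\dots$ Player $I$ picks $u_i\in\Sigma_I^{f(i)}$ and then Player $O$ picks $v_i\in\Sigma_O$; $O$ wins the play iff $\binom{u_0u_1\cdots}{v_0v_1\cdots}\in L$. Strategies: $\tau_I:\Sigma_O^*\to\Sigma_I^*$ with $|\tau_I(w)|=f(|w|)$, $\tau_O:\Sigma_I^+\to\Sigma_O$;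 a player wins the game if she/he has a strategy winning all consistent plays. *)

theory Defs
  imports Main
begin

definition det_weak_muller ::
  "nat set \<Rightarrow> nat set \<Rightarrow> nat set \<Rightarrow> nat \<Rightarrow> (nat \<Rightarrow> nat \<times> nat \<Rightarrow> nat) \<Rightarrow> nat set set \<Rightarrow> bool" where
  "det_weak_muller \<Sigma>I \<Sigma>O Q qI delta F \<longleftrightarrow>
     finite Q \<and> qI \<in> Q \<and>
     (\<forall>q\<in>Q. \<forall>a\<in>\<Sigma>I. \<forall>b\<in>\<Sigma>O. delta q (a, b) \<in> Q) \<and>
     F \<subseteq> Pow Q"

definition wm_size :: "nat set \<Rightarrow> nat set set \<Rightarrow> nat" where
  "wm_size Q F = card Q + card F"

fun wm_run :: "nat \<Rightarrow> (nat \<Rightarrow> nat \<times> nat \<Rightarrow> nat) \<Rightarrow> (nat \<Rightarrow> nat \<times> nat) \<Rightarrow> nat \<Rightarrow> nat" where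
  "wm_run qI delta w 0 = qI"
| "wm_run qI delta w (Suc i) = delta (wm_run qI delta w i) (w i)"

definition wm_lang ::
  "nat set \<Rightarrow> nat set \<Rightarrow> nat \<Rightarrow> (nat \<Rightarrow> nat \<times> nat \<Rightarrow> nat) \<Rightarrow> nat set set \<Rightarrow> (nat \<Rightarrow> nat \<times> nat) set" where
  "wm_lang \<Sigma>I \<Sigma>O qI delta F =
     {w. (\<forall>i. w i \<in> \<Sigma>I \<times> \<Sigma>O) \<and> range (wm_run qI delta w) \<in> F}"

definition delay_fun :: "(nat \<Rightarrow> nat) \<Rightarrow> bool" where
  "delay_fun f \<longleftrightarrow> (\<forall>i. f i \<ge> 1)"

definition constant_delay :: "(nat \<Rightarrow> nat) \<Rightarrow> bool" where
  "constant_delay f \<longleftrightarrow> delay_fun f \<and> (\<forall>i>0. f i = 1)"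

text \<open>The input word u_0 u_1 ... of a play, where each block u i is nonempty.\<close>
definition input_word :: "(nat \<Rightarrow> nat list) \<Rightarrow> nat \<Rightarrow> nat" where
  "input_word u k = concat (map u [0..<Suc k]) ! k"

definition play_word :: "(nat \<Rightarrow> nat list) \<Rightarrow> (nat \<Rightarrow> nat) \<Rightarrow> nat \<Rightarrow> nat \<times> nat" where
  "play_word u v k = (input_word u k, v k)"

definition strategy_I :: "(nat \<Rightarrow> nat) \<Rightarrow> nat set \<Rightarrow> nat set \<Rightarrow> (nat list \<Rightarrow> nat list) \<Rightarrow> bool" where
  "strategy_I f \<Sigma>I \<Sigma>O tauI \<longleftrightarrow>
     (\<forall>w. set w \<subseteq> \<Sigma>O \<longrightarrow> length (tauI w) = f (length w) \<and> set (tauI w) \<subseteq> \<Sigma>I)"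

definition strategy_O :: "nat set \<Rightarrow> nat set \<Rightarrow> (nat list \<Rightarrow> nat) \<Rightarrow> bool" where
  "strategy_O \<Sigma>I \<Sigma>O tauO \<longleftrightarrow> (\<forall>x. x \<noteq> [] \<and> set x \<subseteq> \<Sigma>I \<longrightarrow> tauO x \<in> \<Sigma>O)"

definition is_play :: "(nat \<Rightarrow> nat) \<Rightarrow> nat set \<Rightarrow> nat set \<Rightarrow> (nat \<Rightarrow> nat list) \<Rightarrow> (nat \<Rightarrow> nat) \<Rightarrow> bool" where
  "is_play f \<Sigma>I \<Sigma>O u v \<longleftrightarrow>
     (\<forall>i. length (u i) = f i \<and> set (u i) \<subseteq> \<Sigma>I \<and> v i \<in> \<Sigma>O)"

definition consistent_I :: "(nat list \<Rightarrow> nat list) \<Rightarrow> (nat \<Rightarrow> nat list) \<Rightarrow> (nat \<Rightarrow> nat) \<Rightarrow> bool" where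
  "consistent_I tauI u v \<longleftrightarrow> (\<forall>i. u i = tauI (map v [0..<i]))"

definition consistent_O :: "(nat list \<Rightarrow> nat) \<Rightarrow> (nat \<Rightarrow> nat list) \<Rightarrow> (nat \<Rightarrow> nat) \<Rightarrow> bool" where
  "consistent_O tauO u v \<longleftrightarrow> (\<forall>i. v i = tauO (concat (map u [0..<Suc i])))"

definition O_wins :: "(nat \<Rightarrow> nat) \<Rightarrow> nat set \<Rightarrow> nat set \<Rightarrow> (nat \<Rightarrow> nat \<times> nat) set \<Rightarrow> bool" where
  "O_wins f \<Sigma>I \<Sigma>O L \<longleftrightarrow>
     (\<exists>tauO. strategy_O \<Sigma>I \<Sigma>O tauO \<and>
        (\<forall>u v. is_play f \<Sigma>I \<Sigma>O u v \<and> consistent_O tauO u v \<longrightarrow> play_word u v \<in> L))"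

definition I_wins :: "(nat \<Rightarrow> nat) \<Rightarrow> nat set \<Rightarrow> nat set \<Rightarrow> (nat \<Rightarrow> nat \<times> nat) set \<Rightarrow> bool" where
  "I_wins f \<Sigma>I \<Sigma>O L \<longleftrightarrow>
     (\<exists>tauI. strategy_I f \<Sigma>I \<Sigma>O tauI \<and>
        (\<forall>u v. is_play f \<Sigma>I \<Sigma>O u v \<and> consistent_I tauI u v \<longrightarrow> play_word u v \<notin> L))"

end

theory Submission
  imports Defs
begin

definition SI :: "nat \<Rightarrow> nat set" where "SI n = {..<2*(2^n+1)}"
definition SO :: "nat \<Rightarrow> nat set" where "SO n = {..<2*(n+2)}"
definition QQ :: "nat \<Rightarrow> nat set" where "QQ n = {..<2*n+7}"
definition bt :: "nat \<Rightarrow> nat \<Rightarrow> nat" where "bt j x = x div 2^j mod 2"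
definition stp :: "nat \<Rightarrow> nat \<Rightarrow> nat \<Rightarrow> nat" where
  "stp g a b = (if b div 2 = 0 then 3+g else 5 + 2*(b div 2 - 1) + bt (b div 2 - 1) (a div 2 + 1))"
definition dl :: "nat \<Rightarrow> nat \<Rightarrow> nat \<times> nat \<Rightarrow> nat" where
  "dl n q x = (if q = 0 then (if fst x div 2 \<noteq> 0 then 1 else stp (snd x mod 2) (fst x) (snd x))
    else if q = 3 \<or> q = 4 then (if fst x div 2 = 2^n then (if fst x mod 2 = q - 3 then 1 else 2)
         else stp (q-3) (fst x) (snd x))
    else if q \<ge> 5 then (if bt ((q-5) div 2) (fst x div 2) = (q-5) mod 2 then 2 else 1)
    else q)"
definition FF :: "nat \<Rightarrow> nat set set" where
  "FF n = {{0,1}} \<union> (\<lambda>g. {0,3+g,1}) ` {..<2} \<union> (\<lambda>t. {0,5+t,1}) ` {..<2*n+2}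
     \<union> (\<lambda>(g,t). {0,3+g,5+t,1}) ` ({..<2} \<times> {..<2*n+2})"

lemma card_FF: "card (FF n) \<le> 6*n+9"
proof -
  have a: "card ((\<lambda>g::nat. {0,3+g,1::nat}) ` {..<2}) \<le> 2" using card_image_le[of "{..<2::nat}"] by simp
  have b: "card ((\<lambda>t::nat. {0,5+t,1::nat}) ` {..<2*n+2}) \<le> 2*n+2" using card_image_le[of "{..<2*n+2}"] by simp
  have c: "card ((\<lambda>(g,t). {0,3+g,5+t,1::nat}) ` ({..<2::nat} \<times> {..<2*n+2})) \<le> 2*(2*n+2)"
    using card_image_le[of "{..<2::nat} \<times> {..<2*n+2}" "\<lambda>(g,t). {0,3+g,5+t,1::nat}"]
    by (simp add: card_cartesian_product)
  have "card (FF n) \<le> card ({{0,1::nat}} \<union> (\<lambda>g. {0,3+g,1}) ` {..<2} \<union> (\<lambda>t. {0,5+t,1}) ` {..<2*n+2})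
     + card ((\<lambda>(g,t). {0,3+g,5+t,1::nat}) ` ({..<2} \<times> {..<2*n+2}))"
    unfolding FF_def by (rule card_Un_le)
  also have "\<dots> \<le> card ({{0,1::nat}} \<union> (\<lambda>g. {0,3+g,1}) ` {..<2}) + card ((\<lambda>t. {0,5+t,1::nat}) ` {..<2*n+2})
     + card ((\<lambda>(g,t). {0,3+g,5+t,1::nat}) ` ({..<2} \<times> {..<2*n+2}))"
    by (intro add_right_mono card_Un_le)
  also have "\<dots> \<le> card {{0,1::nat}} + card ((\<lambda>g. {0,3+g,1::nat}) ` {..<2}) + card ((\<lambda>t. {0,5+t,1::nat}) ` {..<2*n+2})
     + card ((\<lambda>(g,t). {0,3+g,5+t,1::nat}) ` ({..<2} \<times> {..<2*n+2}))"
    by (intro add_right_mono card_Un_le)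
  finally show ?thesis using a b c by simp
qed

lemma FF_sub: "FF n \<subseteq> Pow (QQ n)"
  unfolding FF_def QQ_def by auto

lemma bt_lt: "bt j x < 2" unfolding bt_def by simp

lemma stp_lt: assumes "g < 2" "b < 2*(n+2)" shows "stp g a b < 2*n+7"
proof (cases "b div 2 = 0")
  case True then show ?thesis using assms by (simp add: stp_def)
next
  case False
  have "b div 2 - 1 \<le> n" using assms(2) by auto
  then have "2*(b div 2 - 1) \<le> 2*n" by simp
  moreover have "bt (b div 2 - 1) (a div 2 + 1) < 2" by (rule bt_lt)
  ultimately show ?thesis using False by (simp add: stp_def)
qed

lemma dl_lt: assumes "q < 2*n+7" "b < 2*(n+2)" shows "dl n q (a,b) < 2*n+7"
  using assms stp_lt[of "b mod 2" b n a] stp_lt[of "q-3" b n a] unfolding dl_def by auto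

lemma dwm: "det_weak_muller (SI n) (SO n) (QQ n) 0 (dl n) (FF n)"
  unfolding det_weak_muller_def using FF_sub dl_lt by (auto simp: QQ_def SO_def)


definition lt :: "nat \<Rightarrow> nat \<Rightarrow> nat \<Rightarrow> nat" where
  "lt n p z = (if p < 2^n then 2*p else if p = 2^n then 2*2^n + (1 - z mod 2) else 0)"
definition tauI :: "nat \<Rightarrow> (nat \<Rightarrow> nat) \<Rightarrow> nat list \<Rightarrow> nat list" where
  "tauI n g w = map (\<lambda>p. lt n p (hd w)) [(\<Sum>i<length w. g i)..<(\<Sum>i<length w. g i) + g (length w)]"

lemma two_notin_FF: "S \<in> FF n \<Longrightarrow> 2 \<notin> S"
  unfolding FF_def by auto

lemma lt_SI: "lt n p z \<in> SI n"
  unfolding lt_def SI_def by auto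

lemma stratI: "strategy_I g (SI n) (SO n) (tauI n g)"
  unfolding strategy_I_def tauI_def using lt_SI by auto

lemma sum_ge: "delay_fun g \<Longrightarrow> r \<le> (\<Sum>i<r. g i)"
proof (induction r)
  case (Suc r)
  have "g r \<ge> 1" using Suc.prems by (simp add: delay_fun_def)
  then show ?case using Suc by simp
qed simp

lemma I_input:
  assumes dg: "delay_fun g" and g0: "g 0 \<le> 2^n" and ci: "consistent_I (tauI n g) u v"
  shows "input_word u k = lt n k (v 0)"
proof -
  have ui: "u i = map (\<lambda>p. lt n p (v 0)) [(\<Sum>j<i. g j)..<(\<Sum>j<i. g j) + g i]" for i
  proof (cases i)
    case 0
    have "u i = tauI n g []" using ci 0 by (simp add: consistent_I_def)
    also have "\<dots> = map (\<lambda>p. lt n p (v 0)) [0..<g 0]" unfolding tauI_def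
      by (rule map_cong) (use g0 in \<open>auto simp: lt_def\<close>)
    finally show ?thesis using 0 by simp
  next
    case (Suc m)
    have "hd (map v [0..<i]) = v 0" using Suc by (simp add: hd_map upt_rec)
    then show ?thesis using ci by (simp add: consistent_I_def tauI_def)
  qed
  have cc: "concat (map u [0..<r]) = map (\<lambda>p. lt n p (v 0)) [0..<(\<Sum>j<r. g j)]" for r
  proof (induction r)
    case (Suc r)
    have "concat (map u [0..<Suc r]) = map (\<lambda>p. lt n p (v 0)) [0..<(\<Sum>j<r. g j)] @ u r"
      using Suc by simp
    also have "\<dots> = map (\<lambda>p. lt n p (v 0)) ([0..<(\<Sum>j<r. g j)] @ [(\<Sum>j<r. g j)..<(\<Sum>j<r. g j) + g r])"
      using ui by simp
    also have "[0..<(\<Sum>j<r. g j)] @ [(\<Sum>j<r. g j)..<(\<Sum>j<r. g j) + g r] = [0..<(\<Sum>j<Suc r. g j)]"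
      by (simp add: upt_add_eq_append[symmetric])
    finally show ?case .
  qed simp
  have "k < (\<Sum>j<Suc k. g j)" using sum_ge[OF dg, of "Suc k"] by simp
  then show ?thesis unfolding input_word_def cc by simp
qed

lemma I_side:
  assumes n1: "n \<ge> 1" and dg: "delay_fun g" and g0: "g 0 \<le> 2^n"
  shows "I_wins g (SI n) (SO n) (wm_lang (SI n) (SO n) 0 (dl n) (FF n))"
  unfolding I_wins_def
proof (intro exI conjI allI impI)
  show "strategy_I g (SI n) (SO n) (tauI n g)" by (rule stratI)
  fix u v assume pl: "is_play g (SI n) (SO n) u v \<and> consistent_I (tauI n g) u v"
  define N where "N = (2::nat)^n"
  have N1: "N \<ge> 1" unfolding N_def by simp
  define gg where "gg = v 0 mod 2"
  define r where "r = wm_run 0 (dl n) (play_word u v)"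
  have inp: "input_word u k = lt n k (v 0)" for k using I_input[OF dg g0] pl by blast
  have r0: "r 0 = 0" unfolding r_def by simp
  have rS: "r (Suc i) = dl n (r i) (lt n i (v 0), v i)" for i
    unfolding r_def by (simp add: play_word_def inp)
  have ltlow: "lt n i z div 2 = i" "lt n i z mod 2 = 0" if "i < N" for i z
    using that unfolding lt_def N_def by auto
  have lttop: "lt n N z div 2 = N" "lt n N z mod 2 = 1 - z mod 2" for z
    unfolding lt_def N_def by (cases "z mod 2 = 0"; simp add: mod2_eq_if)+
  have ltle: "lt n i z div 2 = i" if "i \<le> N" for i z
    using ltlow lttop that by (cases "i = N") auto
  have inv: "i \<le> N \<Longrightarrow> 2 \<in> r ` {..Suc i} \<or> r i = (if i = 0 then 0 else 3 + gg)" for i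
  proof (induction i)
    case 0 then show ?case using r0 by simp
  next
    case (Suc i)
    then have iN: "i < N" by simp
    show ?case
    proof (cases "2 \<in> r ` {..Suc i}")
      case True then show ?thesis by auto
    next
      case False
      then have ri: "r i = (if i = 0 then 0 else 3 + gg)" using Suc by auto
      have st: "r (Suc i) = stp gg (lt n i (v 0)) (v i)"
        using ri rS[of i] ltlow[OF iN] iN unfolding dl_def gg_def N_def by (cases "i = 0") auto
      show ?thesis
      proof (cases "v i div 2 = 0")
        case True then show ?thesis using st by (simp add: stp_def)
      next
        case False
        define s where "s = 5 + 2*(v i div 2 - 1) + bt (v i div 2 - 1) (i + 1)"
        have "r (Suc i) = s" using st False ltlow[OF iN] by (simp add: stp_def s_def)
        moreover have "(s - 5) div 2 = v i div 2 - 1" "(s - 5) mod 2 = bt (v i div 2 - 1) (i+1)"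
          unfolding s_def using bt_lt[of "v i div 2 - 1" "i+1"] by auto
        ultimately have "r (Suc (Suc i)) = 2"
          using rS[of "Suc i"] ltle[of "Suc i"] iN unfolding dl_def s_def by auto
        then show ?thesis by (metis atMost_iff image_eqI order_refl)
      qed
    qed
  qed
  have "2 \<in> range r"
  proof (cases "2 \<in> r ` {..Suc N}")
    case True then show ?thesis by auto
  next
    case False
    then have rN: "r N = 3 + gg" using inv[of N] N1 by auto
    have "r (Suc N) = 2" using rS[of N] rN lttop unfolding dl_def gg_def N_def by auto
    then show ?thesis by (metis rangeI)
  qed
  then show "play_word u v \<notin> wm_lang (SI n) (SO n) 0 (dl n) (FF n)"
    unfolding wm_lang_def r_def using two_notin_FF by blast
qed


definition KK :: "nat \<Rightarrow> nat \<Rightarrow> nat \<Rightarrow> nat" where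
  "KK n c c1 = (if c \<noteq> 2^n \<and> (\<exists>j\<le>n. bt j c1 \<noteq> bt j (c+1))
     then Suc (LEAST j. j \<le> n \<and> bt j c1 \<noteq> bt j (c+1)) else 0)"
definition tauO :: "nat \<Rightarrow> nat list \<Rightarrow> nat" where
  "tauO n x = (let i = length x - (2^n+2) in 2 * KK n (x!i div 2) (x!(Suc i) div 2) + x!(2^n) mod 2)"
definition ff :: "nat \<Rightarrow> nat \<Rightarrow> nat" where "ff n i = (if i = 0 then 2^n+2 else 1)"

lemma KK_le: "KK n c c1 \<le> Suc n"
proof -
  have "(LEAST j. j \<le> n \<and> bt j c1 \<noteq> bt j (c+1)) \<le> n" if "\<exists>j\<le>n. bt j c1 \<noteq> bt j (c+1)"
    using LeastI_ex[of "\<lambda>j. j \<le> n \<and> bt j c1 \<noteq> bt j (c+1)"] that by blast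
  then show ?thesis unfolding KK_def by auto
qed

lemma stratO: "strategy_O (SI n) (SO n) (tauO n)"
  unfolding strategy_O_def SO_def
proof (intro allI impI)
  fix x :: "nat list"
  let ?k = "KK n (x!(length x - (2^n+2)) div 2) (x!(Suc (length x - (2^n+2))) div 2)"
  have "?k \<le> Suc n" by (rule KK_le)
  then show "tauO n x \<in> {..<2 * (n + 2)}" unfolding tauO_def Let_def by auto
qed

lemma cd: "constant_delay (ff n)" unfolding constant_delay_def delay_fun_def ff_def by auto

lemma bits_eq: "x < 2^(Suc n) \<Longrightarrow> y < 2^(Suc n) \<Longrightarrow> (\<forall>j\<le>n. bt j x = bt j y) \<Longrightarrow> x = y"
proof (induction n arbitrary: x y)
  case 0 then show ?case by (simp add: bt_def)
next
  case (Suc n)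
  have d: "bt j (z div 2) = bt (Suc j) z" for j z unfolding bt_def by (simp add: div_mult2_eq)
  have "x div 2 = y div 2"
    using Suc.IH[of "x div 2" "y div 2"] Suc.prems d by auto
  moreover have "x mod 2 = y mod 2" using Suc.prems(3) by (auto simp: bt_def)
  ultimately show ?case by (metis div_mult_mod_eq)
qed

lemma dl_sink: "dl n 1 x = 1" "dl n (Suc 0) x = Suc 0" unfolding dl_def by simp_all

lemma range_eq: "(\<And>i. r i \<in> S) \<Longrightarrow> (\<And>x. x \<in> S \<Longrightarrow> \<exists>i. r i = x) \<Longrightarrow> range r = S"
  by blast

lemma O_side:
  assumes n1: "n \<ge> 1" and pl: "is_play (ff n) (SI n) (SO n) u v" and co: "consistent_O (tauO n) u v"
  shows "play_word u v \<in> wm_lang (SI n) (SO n) 0 (dl n) (FF n)"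
proof -
  define N where "N = (2::nat)^n"
  have N2: "N \<ge> 2" unfolding N_def using n1 by (metis power_increasing power_one_right num.distinct(1) one_le_numeral)
  have Nlt: "N + 1 < 2^(Suc n)" using N2 unfolding N_def by simp
  define X where "X i = concat (map u [0..<Suc i])" for i
  have lenu: "length (u i) = ff n i" for i using pl by (simp add: is_play_def)
  have lenX: "length (X i) = N + 2 + i" for i
    by (induction i) (simp_all add: X_def lenu ff_def N_def)
  have pre: "i \<le> k \<Longrightarrow> \<exists>t. X k = X i @ t" for i k
  proof (induction k rule: dec_induct)
    case (step k) then obtain t where "X k = X i @ t" by blast
    then have "X (Suc k) = X i @ (t @ u (Suc k))" by (simp add: X_def)
    then show ?case by blast
  qed simp
  define a where "a p = input_word u p" for p
  have inX: "a p = X p ! p" for p by (simp add: a_def input_word_def X_def)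
  have nthX: "X i ! p = a p" if "p < N + 2 + i" for i p
  proof (cases "p \<le> i")
    case True then obtain t where "X i = X p @ t" using pre by blast
    then show ?thesis using lenX[of p] by (simp add: inX nth_append)
  next
    case False then obtain t where "X p = X i @ t" using pre by fastforce
    then show ?thesis using lenX[of i] that by (simp add: inX nth_append)
  qed
  have aSI: "a p \<in> SI n" for p
  proof -
    have "set (X p) \<subseteq> SI n" using pl by (auto simp: X_def is_play_def)
    moreover have "a p \<in> set (X p)" using lenX[of p] by (simp add: inX)
    ultimately show ?thesis by blast
  qed
  define c where "c p = a p div 2" for p
  have cN: "c p \<le> N" for p using aSI[of p] unfolding c_def SI_def N_def by auto
  define g where "g = a N mod 2"
  have g2: "g < 2" unfolding g_def by simp
  have vi: "v i = 2 * KK n (c i) (c (Suc i)) + g" for i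
  proof -
    have "v i = tauO n (X i)" using co by (simp add: consistent_O_def X_def)
    then show ?thesis unfolding tauO_def Let_def lenX c_def g_def
      using nthX[of i i] nthX[of "Suc i" i] nthX[of N i] by (simp add: N_def)
  qed
  have vdiv: "v i div 2 = KK n (c i) (c (Suc i))" and vmod: "v i mod 2 = g" for i
    using vi g2 by auto
  define r where "r = wm_run 0 (dl n) (play_word u v)"
  have r0: "r 0 = 0" unfolding r_def by simp
  have rS: "r (Suc i) = dl n (r i) (a i, v i)" for i
    unfolding r_def by (simp add: play_word_def a_def)
  have sink: "r k = 1" if "r i = 1" "i \<le> k" for i k
    using that(2) by (induction k rule: dec_induct) (simp_all add: rS dl_sink that(1))
  have alph: "\<forall>i. play_word u v i \<in> SI n \<times> SO n"
    using aSI pl by (auto simp: play_word_def a_def is_play_def)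
  have "range r \<in> FF n"
  proof (cases "c 0 = 0")
    case False
    then have "r 1 = 1" using rS[of 0] r0 by (simp add: dl_def c_def)
    then have r1: "r 1 = 1" .
    have "range r = {0,1}"
    proof (rule range_eq)
      fix i show "r i \<in> {0,1}" using r0 sink[OF r1, of i] by (cases i) auto
    next
      fix x assume "x \<in> {0,1::nat}" then show "\<exists>i. r i = x" using r0 r1 by blast
    qed
    then show ?thesis by (simp add: FF_def)
  next
    case True
    define D where "D m = (\<exists>j\<le>n. bt j (c (Suc m)) \<noteq> bt j (c m + 1))" for m
    define P where "P m = (c m = N \<or> D m)" for m
    have succ: "c (Suc m) = c m + 1" if "\<not> P m" for m
    proof (rule bits_eq[of _ n])
      show "c (Suc m) < 2^Suc n" using cN[of "Suc m"] Nlt by simp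
      show "c m + 1 < 2^Suc n" using cN[of m] Nlt by simp
      show "\<forall>j\<le>n. bt j (c (Suc m)) = bt j (c m + 1)" using that unfolding P_def D_def by auto
    qed
    have exP: "\<exists>m. P m"
    proof (rule ccontr)
      assume "\<not> (\<exists>m. P m)"
      then have "c m = m" for m using succ True by (induction m) auto
      then show False using \<open>\<not> (\<exists>m. P m)\<close> unfolding P_def by auto
    qed
    define m0 where "m0 = (LEAST m. P m)"
    have Pm0: "P m0" unfolding m0_def using exP by (metis LeastI)
    have nP: "i < m0 \<Longrightarrow> \<not> P i" for i unfolding m0_def using not_less_Least by blast
    have ci: "i \<le> m0 \<Longrightarrow> c i = i" for i
      using True succ nP by (induction i) auto
    have m0N: "m0 \<le> N" using ci[of m0] cN[of m0] by simp
    have K0: "i < m0 \<Longrightarrow> KK n (c i) (c (Suc i)) = 0" for i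
      using nP unfolding KK_def P_def D_def by auto
    have dl3: "dl n (3+g) (x, y) = (if x div 2 = N then (if x mod 2 = g then 1 else 2) else stp g x y)" for x y
      using g2 unfolding dl_def N_def by auto
    have rcnt: "1 \<le> i \<Longrightarrow> i \<le> m0 \<Longrightarrow> r i = 3 + g" for i
    proof (induction i rule: dec_induct)
      case base
      then have "KK n (c 0) (c 1) = 0" using K0 by simp
      then show ?case using rS[of 0] r0 True vdiv[of 0] vmod[of 0]
        by (simp add: dl_def c_def stp_def)
    next
      case (step i)
      then have ri: "r i = 3 + g" by simp
      from step have "c i \<noteq> N" using ci[of i] m0N by simp
      moreover have "v i div 2 = 0" using vdiv[of i] K0[of i] step by simp
      ultimately show ?case using rS[of i] ri dl3 by (simp add: c_def stp_def)
    qed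
    show ?thesis
    proof (cases "c m0 = N")
      case True
      then have m0e: "m0 = N" using ci[of m0] by simp
      have "r (Suc m0) = 1" using rS[of m0] rcnt[of m0] m0e N2 dl3 True
        by (simp add: c_def g_def)
      then have rm: "r (Suc m0) = 1" .
      have "range r = {0, 3+g, 1}"
      proof (rule range_eq)
        fix i show "r i \<in> {0, 3+g, 1}"
        proof -
          consider "i = 0" | "1 \<le> i \<and> i \<le> m0" | "Suc m0 \<le> i" by linarith
          then show ?thesis using r0 rcnt[of i] sink[OF rm, of i] by cases auto
        qed
      next
        fix x assume "x \<in> {0, 3+g, 1::nat}"
        then show "\<exists>i. r i = x" using r0 rm rcnt[of m0] m0e N2 by auto
      qed
      then show ?thesis using g2 by (auto simp: FF_def)
    next
      case False
      then have Dm: "D m0" using Pm0 P_def by simp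
      define j where "j = (LEAST j. j \<le> n \<and> bt j (c (Suc m0)) \<noteq> bt j (c m0 + 1))"
      have jp: "j \<le> n \<and> bt j (c (Suc m0)) \<noteq> bt j (c m0 + 1)"
        unfolding j_def using Dm D_def LeastI_ex[of "\<lambda>j. j \<le> n \<and> bt j (c (Suc m0)) \<noteq> bt j (c m0 + 1)"] by blast
      have vm: "v m0 div 2 = Suc j" using vdiv[of m0] False Dm unfolding KK_def D_def j_def N_def by simp
      define s where "s = 5 + 2*j + bt j (c m0 + 1)"
      have e2: "bt j (c m0 + 1) < 2" by (rule bt_lt)
      have rs: "r (Suc m0) = s"
      proof (cases "m0 = 0")
        case True then show ?thesis using rS[of 0] r0 \<open>c 0 = 0\<close> vm
          by (simp add: dl_def c_def stp_def s_def)
      next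
        case False then show ?thesis using rS[of m0] rcnt[of m0] dl3 vm \<open>c m0 \<noteq> N\<close>
          by (simp add: c_def stp_def s_def)
      qed
      have "(s - 5) div 2 = j" "(s - 5) mod 2 = bt j (c m0 + 1)" "s \<ge> 5" "s \<noteq> 3" "s \<noteq> 4"
        unfolding s_def using e2 by auto
      then have rss: "r (Suc (Suc m0)) = 1" using rS[of "Suc m0"] rs jp
        unfolding dl_def by (simp add: c_def)
      define t where "t = 2*j + bt j (c m0 + 1)"
      have t: "t < 2*n+2" "s = 5 + t" unfolding t_def s_def using jp e2 by auto
      show ?thesis
      proof (cases "m0 = 0")
        case True
        have "range r = {0, 5+t, 1}"
        proof (rule range_eq)
          fix i show "r i \<in> {0, 5+t, 1}"
            using r0 rs t rss sink[of "Suc (Suc m0)" i] True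
            by (cases i; cases "i = 1") auto
        next
          fix x assume "x \<in> {0, 5+t, 1::nat}"
          then show "\<exists>i. r i = x" using r0 rs t rss by blast
        qed
        then show ?thesis using t by (auto simp: FF_def)
      next
        case False
        have "range r = {0, 3+g, 5+t, 1}"
        proof (rule range_eq)
          fix i show "r i \<in> {0, 3+g, 5+t, 1}"
          proof -
            consider "i = 0" | "1 \<le> i \<and> i \<le> m0" | "i = Suc m0" | "Suc (Suc m0) \<le> i" by linarith
            then show ?thesis using r0 rcnt rs t rss sink[of "Suc (Suc m0)" i] by cases auto
          qed
        next
          fix x assume "x \<in> {0, 3+g, 5+t, 1::nat}"
          then show "\<exists>i. r i = x" using r0 rs t rss rcnt[of m0] False by auto
        qed
        then show ?thesis using t g2 by (auto simp: FF_def)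
      qed
    qed
  qed
  then show ?thesis using alph unfolding wm_lang_def r_def by blast
qed


theorem corollary1:
  shows "\<exists>c::nat. \<forall>n::nat. n \<ge> 1 \<longrightarrow>
    (\<exists>(\<Sigma>I::nat set) (\<Sigma>O::nat set) (Q::nat set) (qI::nat) delta (F::nat set set).
        finite \<Sigma>I \<and> \<Sigma>I \<noteq> {} \<and> finite \<Sigma>O \<and> \<Sigma>O \<noteq> {} \<and>
        det_weak_muller \<Sigma>I \<Sigma>O Q qI delta F \<and>
        wm_size Q F \<le> c * n \<and>
        (\<exists>f. constant_delay f \<and> O_wins f \<Sigma>I \<Sigma>O (wm_lang \<Sigma>I \<Sigma>O qI delta F)) \<and>
        (\<forall>g. delay_fun g \<and> g 0 \<le> 2 ^ n \<longrightarrow> I_wins g \<Sigma>I \<Sigma>O (wm_lang \<Sigma>I \<Sigma>O qI delta F)))"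
proof (intro exI[of _ 24] allI impI)
  fix n :: nat assume n1: "n \<ge> 1"
  have sz: "wm_size (QQ n) (FF n) \<le> 24 * n"
    using card_FF[of n] n1 unfolding wm_size_def QQ_def by simp
  have ow: "O_wins (ff n) (SI n) (SO n) (wm_lang (SI n) (SO n) 0 (dl n) (FF n))"
    unfolding O_wins_def using stratO O_side[OF n1] by blast
  show "\<exists>(\<Sigma>I::nat set) (\<Sigma>O::nat set) (Q::nat set) (qI::nat) delta (F::nat set set).
        finite \<Sigma>I \<and> \<Sigma>I \<noteq> {} \<and> finite \<Sigma>O \<and> \<Sigma>O \<noteq> {} \<and>
        det_weak_muller \<Sigma>I \<Sigma>O Q qI delta F \<and>
        wm_size Q F \<le> 24 * n \<and>
        (\<exists>f. constant_delay f \<and> O_wins f \<Sigma>I \<Sigma>O (wm_lang \<Sigma>I \<Sigma>O qI delta F)) \<and>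
        (\<forall>g. delay_fun g \<and> g 0 \<le> 2 ^ n \<longrightarrow> I_wins g \<Sigma>I \<Sigma>O (wm_lang \<Sigma>I \<Sigma>O qI delta F))"
    apply (rule exI[of _ "SI n"], rule exI[of _ "SO n"], rule exI[of _ "QQ n"], rule exI[of _ 0],
           rule exI[of _ "dl n"], rule exI[of _ "FF n"])
    using sz ow cd[of n] dwm[of n] I_side[OF n1]
    by (auto simp: SI_def SO_def)
qed

end
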